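(* Let $d\ge1$ and let $\mu$ be the probability measure on $\mathbb{R}^d$ given by $\mathrm{d}\mu(x)=\rho(|x|)\,\mathrm{d}x$ with $\rho:[0,\infty)\to(0,\infty)$ continuous. Then for every $f\in\mathcal{C}_d$ and every closed ball $B$ centered at the origin, $$\int_{\mathbb{R}^d} f\,\mathbf{1}_B\,\mathrm{d}\mu\ \ge\ \Big(\int_{\mathbb{R}^d} f\,\mathrm{d}\mu\Big)\,\mu(B).$$
   Context: $\mathcal{C}_d$ denotes the set of continuous compactly supported functions $f:\mathbb{R}^d\to[0,\infty)$ such that for every $c>0$ the superlevel set $\{x: f(x)>c\}$ is convex, and $f(x)\le f(0)$ for all $x\in\mathbb{R}^d$. *)

theory Defs
  imports "HOL-Probability.Probability"
begin

text \<open>R^d is modelled by a Euclidean space type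
  'a with d = DIM('a).\<close>

definition class_C :: "('a::euclidean_space \<Rightarrow> real) set" where
  "class_C = {f. continuous_on UNIV f
              \<and> compact (closure {x. f x \<noteq> 0})
              \<and> (\<forall>x. 0 \<le> f x)
              \<and> (\<forall>c>0. convex {x. f x > c})
              \<and> (\<forall>x. f x \<le> f 0)}"

definition radial_measure :: "(real \<Rightarrow> real) \<Rightarrow> 'a::euclidean_space measure" where
  "radial_measure \<rho> = density lborel (\<lambda>x. ennreal (\<rho> (norm x)))"

end

theory Submission
  imports Defs
begin

lemma nn_integral_scale:
  fixes f :: "'a::euclidean_space \<Rightarrow> ennreal"
  assumes [measurable]: "f \<in> borel_measurable borel" and c: "c \<noteq> 0"
  shows "(\<integral>\<^sup>+x. f x \<partial>lborel) = ennreal (\<bar>c\<bar>^DIM('a)) * (\<integral>\<^sup>+x. f (c *\<^sub>R x) \<partial>lborel)"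
  by (subst lborel_affine[OF c, of 0]) (simp add: nn_integral_density nn_integral_distr nn_integral_cmult)

lemma tail_int:
  fixes a :: real assumes a: "0 < a" and n: "0 < n"
  shows "(\<integral>\<^sup>+s. ennreal (1 / s^(Suc n)) * indicator {a..} s \<partial>lborel) = ennreal (1 / (real n * a^n))"
proof -
  have "(\<integral>\<^sup>+s. ennreal (if 0 < s then 1 / s^(Suc n) else 0) * indicator {a..} s \<partial>lborel) = ennreal (0 - (- 1 / (real n * a^n)))"
  proof (rule nn_integral_FTC_atLeast)
    show "(\<lambda>s::real. if 0 < s then 1 / s^(Suc n) else 0) \<in> borel_measurable borel" by measurable
    fix x assume "a \<le> x"
    then have x: "0 < x" using a by linarith
    have "((\<lambda>s. - 1 / (real n * s^n)) has_real_derivative 1 / x^(Suc n)) (at x)"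
      using x n apply (auto intro!: derivative_eq_intros)
      by (cases n) (auto simp: field_simps power2_eq_square)
    then show "((\<lambda>s. - 1 / (real n * s^n)) has_real_derivative (if 0 < x then 1 / x^(Suc n) else 0)) (at x)"
      using x by simp
    show "0 \<le> (if 0 < x then 1 / x^(Suc n) else 0)" using x by simp
  next
    show "((\<lambda>s. - 1 / (real n * s^n)) \<longlongrightarrow> 0) at_top" using n
      by real_asymp
  qed
  moreover have "(\<integral>\<^sup>+s. ennreal (if 0 < s then 1 / s^(Suc n) else 0) * indicator {a..} s \<partial>lborel) =
     (\<integral>\<^sup>+s. ennreal (1 / s^(Suc n)) * indicator {a..} s \<partial>lborel)"
    using a by (intro nn_integral_cong) (auto split: split_indicator)
  ultimately show ?thesis by simp
qed

lemma rep:
  fixes h :: "'a::euclidean_space \<Rightarrow> ennreal" and w :: "real \<Rightarrow> real"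
  assumes h[measurable]: "h \<in> borel_measurable borel"
    and wc: "continuous_on UNIV w" and w0: "\<And>t. 0 \<le> w t"
  shows "(\<integral>\<^sup>+y. h y * ennreal (w (norm y)) \<partial>lborel) = of_nat DIM('a) *
    (\<integral>\<^sup>+x. indicator (ball 0 1) x * (\<integral>\<^sup>+s. indicator {0<..} s * h (s *\<^sub>R x) *
         ennreal (w (s * norm x) * (s * norm x)^DIM('a) / s) \<partial>lborel) \<partial>lborel)"
proof -
  let ?n = "DIM('a)"
  have wm[measurable]: "w \<in> borel_measurable borel" using wc by (rule borel_measurable_continuous_onI)
  define K where "K x s = indicator {0<..} s * h (s *\<^sub>R x) *
         ennreal (w (s * norm x) * (s * norm x)^?n / s)" for x :: 'a and s :: real
  define G where "G y s = indicator {0<..} s * indicator (ball 0 s) y * h y * ennreal (w (norm y) * (norm y)^?n / s^(Suc ?n))" for y :: 'a and s :: real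
  have [measurable]: "Measurable.pred (borel \<Otimes>\<^sub>M borel) (\<lambda>x::'a\<times>real. fst x \<in> ball 0 1)"
    unfolding mem_ball by measurable
  have [measurable]: "Measurable.pred (borel \<Otimes>\<^sub>M borel) (\<lambda>x::'a\<times>real. fst x \<in> ball 0 (snd x))"
    unfolding mem_ball by measurable
  have Kx[measurable]: "K x \<in> borel_measurable borel" for x unfolding K_def by measurable
  have Gy[measurable]: "(\<lambda>s. G y s) \<in> borel_measurable borel" for y unfolding G_def indicator_def mem_ball by measurable
  have Gs[measurable]: "(\<lambda>y. G y s) \<in> borel_measurable borel" for s unfolding G_def indicator_def mem_ball by measurable
  have Km[measurable]: "case_prod (\<lambda>x s. indicator (ball 0 1) x * K x s) \<in> borel_measurable (lborel \<Otimes>\<^sub>M lborel)"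
    unfolding K_def by measurable
  have Gm[measurable]: "case_prod G \<in> borel_measurable (lborel \<Otimes>\<^sub>M lborel)"
    unfolding G_def by measurable
  have "(\<integral>\<^sup>+x. indicator (ball 0 1) x * (\<integral>\<^sup>+s. K x s \<partial>lborel) \<partial>lborel)
      = (\<integral>\<^sup>+x. (\<integral>\<^sup>+s. indicator (ball 0 1) x * K x s \<partial>lborel) \<partial>lborel)"
    using Kx by (intro nn_integral_cong, subst nn_integral_cmult) auto
  also have "\<dots> = (\<integral>\<^sup>+s. (\<integral>\<^sup>+x. indicator (ball 0 1) x * K x s \<partial>lborel) \<partial>lborel)"
    by (rule lborel_pair.Fubini'[symmetric]) (rule Km)
  also have "\<dots> = (\<integral>\<^sup>+s. (\<integral>\<^sup>+y. G y s \<partial>lborel) \<partial>lborel)"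
  proof (rule nn_integral_cong)
    fix s :: real
    show "(\<integral>\<^sup>+x. indicator (ball 0 1) x * K x s \<partial>lborel) = (\<integral>\<^sup>+y. G y s \<partial>lborel)"
    proof (cases "0 < s")
      case False then show ?thesis by (simp add: K_def G_def)
    next
      case True
      have "(\<integral>\<^sup>+y. G y s \<partial>lborel) = ennreal (\<bar>s\<bar>^?n) * (\<integral>\<^sup>+x. G (s *\<^sub>R x) s \<partial>lborel)"
        by (rule nn_integral_scale) (use True in auto)
      also have "\<dots> = (\<integral>\<^sup>+x. ennreal (\<bar>s\<bar>^?n) * G (s *\<^sub>R x) s \<partial>lborel)"
        by (subst nn_integral_cmult) auto
      also have "\<dots> = (\<integral>\<^sup>+x. indicator (ball 0 1) x * K x s \<partial>lborel)"
      proof (intro nn_integral_cong)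
        fix x :: 'a
        have "s^?n * (w (s * norm x) * (s * norm x)^?n / s^(Suc ?n)) = w (s * norm x) * (s * norm x)^?n / s"
          using True by (simp add: field_simps)
        then have hx: "ennreal (s^?n) * ennreal (w (s * norm x) * (s * norm x)^?n / s^(Suc ?n)) = ennreal (w (s * norm x) * (s * norm x)^?n / s)"
          using True w0 by (subst ennreal_mult[symmetric]) auto
        have "(s *\<^sub>R x \<in> ball 0 s) = (x \<in> ball 0 1)" using True by simp
        then show "ennreal (\<bar>s\<bar>^?n) * G (s *\<^sub>R x) s = indicator (ball 0 1) x * K x s"
          using True w0 unfolding G_def K_def
          using hx by (auto simp: abs_mult mult_ac split: split_indicator)
      qed
      finally show ?thesis by (rule sym)
    qed
  qed
  also have "\<dots> = (\<integral>\<^sup>+y. (\<integral>\<^sup>+s. G y s \<partial>lborel) \<partial>lborel)"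
    by (rule lborel_pair.Fubini') (rule Gm)
  finally have eq1: "(\<integral>\<^sup>+x. indicator (ball 0 1) x * (\<integral>\<^sup>+s. K x s \<partial>lborel) \<partial>lborel) = (\<integral>\<^sup>+y. (\<integral>\<^sup>+s. G y s \<partial>lborel) \<partial>lborel)" .
  have n0: "0 < ?n" by simp
  have eq2: "AE y in lborel. (\<integral>\<^sup>+s. G y s \<partial>lborel) = h y * ennreal (w (norm y)) * ennreal (1 / real ?n)"
    using AE_lborel_singleton[of 0]
  proof eventually_elim
    case (elim y)
    define a where "a = norm y"
    have a: "0 < a" using elim by (simp add: a_def)
    have "(\<integral>\<^sup>+s. G y s \<partial>lborel) = (\<integral>\<^sup>+s. (h y * ennreal (w a * a^?n)) * (ennreal (1 / s^(Suc ?n)) * indicator {a..} s) \<partial>lborel)"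
      using AE_lborel_singleton[of a]
    proof (intro nn_integral_cong_AE, eventually_elim)
      case (elim s)
      show ?case
      proof (cases "a < s")
        case True
        then have "ennreal (w a * a ^ ?n / s ^ Suc ?n) = ennreal (w a * a^?n) * ennreal (1 / s^(Suc ?n))"
          using a w0 by (subst ennreal_mult[symmetric]) auto
        moreover have s0: "0 < s" using True a by linarith
        ultimately show ?thesis using True a unfolding G_def a_def by (simp add: mult_ac indicator_def s0)
      next
        case False
        then show ?thesis using elim unfolding G_def a_def by (auto split: split_indicator)
      qed
    qed
    also have "\<dots> = (h y * ennreal (w a * a^?n)) * ennreal (1 / (real ?n * a^?n))"
      using a n0 tail_int[OF a n0] by (subst nn_integral_cmult) auto
    also have "\<dots> = h y * ennreal (w a) * ennreal (1 / real ?n)"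
    proof -
      have "ennreal (w a * a^?n) * ennreal (1 / (real ?n * a^?n)) = ennreal (w a) * ennreal (1 / real ?n)"
        using a w0 n0 by (simp add: ennreal_mult[symmetric] field_simps)
      then show ?thesis by (simp add: mult_ac)
    qed
    finally show ?case by (simp add: a_def)
  qed
  have "of_nat ?n * (\<integral>\<^sup>+x. indicator (ball 0 1) x * (\<integral>\<^sup>+s. K x s \<partial>lborel) \<partial>lborel)
     = of_nat ?n * (\<integral>\<^sup>+y. h y * ennreal (w (norm y)) * ennreal (1 / real ?n) \<partial>lborel)"
    unfolding eq1 using eq2 by (simp add: nn_integral_cong_AE)
  also have "\<dots> = of_nat ?n * ((\<integral>\<^sup>+y. h y * ennreal (w (norm y)) \<partial>lborel) * ennreal (1 / real ?n))"
    by (subst nn_integral_multc) auto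
  also have "\<dots> = (\<integral>\<^sup>+y. h y * ennreal (w (norm y)) \<partial>lborel) * (of_nat ?n * ennreal (1 / real ?n))"
    by (simp add: mult_ac)
  also have "of_nat ?n * ennreal (1 / real ?n) = 1"
    using n0 by (simp add: ennreal_of_nat_eq_real_of_nat ennreal_mult[symmetric])
  finally show ?thesis unfolding K_def by simp
qed
lemma ray_mono:
  fixes f :: "'a::euclidean_space \<Rightarrow> real"
  assumes f: "f \<in> class_C" and s: "0 \<le> s" "s \<le> t"
  shows "f (t *\<^sub>R x) \<le> f (s *\<^sub>R x)"
proof (rule ccontr)
  assume "\<not> ?thesis"
  then have lt: "f (s *\<^sub>R x) < f (t *\<^sub>R x)" by simp
  have nn: "\<And>x. 0 \<le> f x" and cv: "\<And>c. c > 0 \<Longrightarrow> convex {x. f x > c}" and mx: "\<And>x. f x \<le> f 0"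
    using f by (auto simp: class_C_def)
  define c where "c = (f (s *\<^sub>R x) + f (t *\<^sub>R x)) / 2"
  have c0: "c > 0" using lt nn[of "s *\<^sub>R x"] by (simp add: c_def)
  have t0: "t > 0" using s lt by (cases "t = 0") auto
  have m1: "t *\<^sub>R x \<in> {x. f x > c}" using lt by (simp add: c_def)
  have m2: "0 \<in> {x. f x > c}" using lt mx[of "t *\<^sub>R x"] by (simp add: c_def)
  have "(s / t) *\<^sub>R (t *\<^sub>R x) + (1 - s / t) *\<^sub>R 0 \<in> {x. f x > c}"
    by (rule convexD[OF cv[OF c0] m1 m2]) (use s t0 in auto)
  moreover have "(s / t) *\<^sub>R (t *\<^sub>R x) + (1 - s / t) *\<^sub>R 0 = s *\<^sub>R x" using t0 by simp
  ultimately have "f (s *\<^sub>R x) > c" by (metis mem_Collect_eq)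
  then show False using lt by (simp add: c_def)
qed

theorem theorem2p1:
  fixes \<rho> :: "real \<Rightarrow> real" and f :: "'a::euclidean_space \<Rightarrow> real" and r :: real
  assumes rho_cont: "continuous_on {0..} \<rho>"
    and rho_pos: "\<And>t. 0 \<le> t \<Longrightarrow> 0 < \<rho> t"
    and prob: "prob_space (radial_measure \<rho> :: 'a measure)"
    and f: "f \<in> class_C"
    and r: "0 < r"
  shows "(\<integral>x. f x * indicator (cball 0 r) x \<partial>(radial_measure \<rho>))
           \<ge> (\<integral>x. f x \<partial>(radial_measure \<rho>)) * measure (radial_measure \<rho>) (cball (0::'a) r)"
proof -
  let ?n = "DIM('a)"
  let ?\<mu> = "radial_measure \<rho> :: 'a measure"
  define w where "w t = \<rho> \<bar>t\<bar>" for t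
  have wc: "continuous_on UNIV w" unfolding w_def
    by (rule continuous_on_compose2[OF rho_cont]) (auto intro: continuous_intros)
  have w0: "0 \<le> w t" for t using rho_pos[of "\<bar>t\<bar>"] by (simp add: w_def)
  have wm[measurable]: "w \<in> borel_measurable borel" using wc by (rule borel_measurable_continuous_onI)
  have fC: "continuous_on UNIV f" and fnn: "\<And>x. 0 \<le> f x" and fmax: "\<And>x. f x \<le> f 0"
    using f by (auto simp: class_C_def)
  have fm[measurable]: "f \<in> borel_measurable borel" using fC by (rule borel_measurable_continuous_onI)
  have mu_eq: "?\<mu> = density lborel (\<lambda>x. ennreal (w (norm x)))"
    by (simp add: radial_measure_def w_def)
  have sets_mu[simp, measurable_cong]: "sets ?\<mu> = sets borel" by (simp add: mu_eq)
  have space_mu[simp]: "space ?\<mu> = UNIV" by (simp add: mu_eq)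
  have dens: "(\<integral>\<^sup>+y. h y \<partial>?\<mu>) = (\<integral>\<^sup>+y. h y * ennreal (w (norm y)) \<partial>lborel)"
    if [measurable]: "h \<in> borel_measurable borel" for h :: "'a \<Rightarrow> ennreal"
    unfolding mu_eq by (subst nn_integral_density) (auto simp: mult_ac)
  define I where "I h x = (\<integral>\<^sup>+s. indicator {0<..} s * h (s *\<^sub>R x) *
         ennreal (w (s * norm x) * (s * norm x)^?n / s) \<partial>lborel)" for h :: "'a \<Rightarrow> ennreal" and x :: 'a
  have repr: "(\<integral>\<^sup>+y. h y \<partial>?\<mu>) = of_nat ?n * (\<integral>\<^sup>+x. indicator (ball 0 1) x * I h x \<partial>lborel)"
    if [measurable]: "h \<in> borel_measurable borel" for h :: "'a \<Rightarrow> ennreal"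
    unfolding dens[OF that] I_def by (rule rep[OF that wc w0])
  define B where "B = cball (0::'a) r"
  have Bm[measurable]: "B \<in> sets borel" by (simp add: B_def)
  define P where "P = (\<integral>\<^sup>+t. indicator {0<..} t * indicator {..r} t * ennreal (w t * t^?n / t) \<partial>lborel)"
  define Q where "Q = (\<integral>\<^sup>+t. indicator {0<..} t * indicator {r<..} t * ennreal (w t * t^?n / t) \<partial>lborel)"
  have const: "(\<integral>\<^sup>+t. indicator {0<..} t * g t * ennreal (w t * t^?n / t) \<partial>lborel)
      = (\<integral>\<^sup>+s. indicator {0<..} s * g (s * c) * ennreal (w (s * c) * (s * c)^?n / s) \<partial>lborel)"
    if gm[measurable]: "g \<in> borel_measurable borel" and c: "0 < c" for g :: "real \<Rightarrow> ennreal" and c :: real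
  proof -
    have "(\<integral>\<^sup>+t. indicator {0<..} t * g t * ennreal (w t * t^?n / t) \<partial>lborel)
       = ennreal \<bar>c\<bar> * (\<integral>\<^sup>+s. indicator {0<..} (0 + c * s) * g (0 + c * s) * ennreal (w (0 + c * s) * (0 + c * s)^?n / (0 + c * s)) \<partial>lborel)"
      by (rule nn_integral_real_affine) (use c in auto)
    also have "\<dots> = (\<integral>\<^sup>+s. ennreal c * (indicator {0<..} (c * s) * g (c * s) * ennreal (w (c * s) * (c * s)^?n / (c * s))) \<partial>lborel)"
      using c by (subst nn_integral_cmult) auto
    also have "\<dots> = (\<integral>\<^sup>+s. indicator {0<..} s * g (s * c) * ennreal (w (s * c) * (s * c)^?n / s) \<partial>lborel)"
    proof (rule nn_integral_cong)
      fix s :: real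
      show "ennreal c * (indicator {0<..} (c * s) * g (c * s) * ennreal (w (c * s) * (c * s)^?n / (c * s)))
          = indicator {0<..} s * g (s * c) * ennreal (w (s * c) * (s * c)^?n / s)"
      proof (cases "0 < s")
        case True
        have e: "ennreal c * ennreal (w (c * s) * (c * s)^?n / (c * s)) = ennreal (w (c * s) * (c * s)^?n / s)"
          using True c w0 by (subst ennreal_mult[symmetric]) auto
        have "ennreal c * (indicator {0<..} (c * s) * g (c * s) * ennreal (w (c * s) * (c * s)^?n / (c * s)))
           = g (c * s) * (ennreal c * ennreal (w (c * s) * (c * s)^?n / (c * s)))"
          using True c by (simp add: mult_ac zero_less_mult_iff)
        also have "\<dots> = g (c * s) * ennreal (w (c * s) * (c * s)^?n / s)" by (simp only: e)
        finally show ?thesis using True by (simp add: mult.commute[of s c])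
      next
        case False
        then show ?thesis using c by (auto simp: zero_less_mult_iff)
      qed
    qed
    finally show ?thesis .
  qed
  define hB where "hB y = ennreal (f y) * indicator B y" for y
  define hC where "hC y = ennreal (f y) * indicator (- B) y" for y
  have hBm[measurable]: "hB \<in> borel_measurable borel" unfolding hB_def by measurable
  have hCm[measurable]: "hC \<in> borel_measurable borel" unfolding hC_def by measurable
  have iBm[measurable]: "indicator B \<in> borel_measurable borel" by measurable
  have iCm[measurable]: "indicator (- B) \<in> borel_measurable borel" by measurable
  have Im[measurable]: "I h \<in> borel_measurable borel" if [measurable]: "h \<in> borel_measurable borel" for h
    unfolding I_def by measurable
  have IB: "I (indicator B) x = P" if x: "x \<noteq> 0" for x
  proof -
    have "P = (\<integral>\<^sup>+s. indicator {0<..} s * indicator {..r} (s * norm x) * ennreal (w (s * norm x) * (s * norm x)^?n / s) \<partial>lborel)"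
      unfolding P_def using x by (intro const) auto
    also have "\<dots> = I (indicator B) x" unfolding I_def B_def
      by (intro nn_integral_cong) (auto split: split_indicator)
    finally show ?thesis ..
  qed
  have IC: "I (indicator (- B)) x = Q" if x: "x \<noteq> 0" for x
  proof -
    have "Q = (\<integral>\<^sup>+s. indicator {0<..} s * indicator {r<..} (s * norm x) * ennreal (w (s * norm x) * (s * norm x)^?n / s) \<partial>lborel)"
      unfolding Q_def using x by (intro const) auto
    also have "\<dots> = I (indicator (- B)) x" unfolding I_def B_def
      by (intro nn_integral_cong) (auto split: split_indicator)
    finally show ?thesis ..
  qed
  have Icm: "I (\<lambda>y. ennreal v * g y) x = ennreal v * I g x" if [measurable]: "g \<in> borel_measurable borel" for v g x
    unfolding I_def by (subst nn_integral_cmult[symmetric]) (auto simp: mult_ac)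
  have ptw: "I hB x * Q \<ge> I hC x * P" if x: "x \<noteq> 0" for x
  proof -
    define v where "v = f ((r / norm x) *\<^sub>R x)"
    have "ennreal v * P = I (\<lambda>y. ennreal v * indicator B y) x" using IB[OF x] by (simp add: Icm)
    also have "\<dots> \<le> I hB x" unfolding I_def
    proof (intro nn_integral_mono)
      fix s :: real
      show "indicator {0<..} s * (ennreal v * indicator B (s *\<^sub>R x)) * ennreal (w (s * norm x) * (s * norm x)^?n / s)
          \<le> indicator {0<..} s * hB (s *\<^sub>R x) * ennreal (w (s * norm x) * (s * norm x)^?n / s)"
      proof (cases "0 < s \<and> s *\<^sub>R x \<in> B")
        case True
        then have "s \<le> r / norm x" using x by (auto simp: B_def field_simps)
        then have "v \<le> f (s *\<^sub>R x)" unfolding v_def using True by (intro ray_mono[OF f]) auto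
        then show ?thesis using True unfolding hB_def
          by (auto intro!: mult_right_mono ennreal_leI)
      next
        case False
        then show ?thesis by (auto simp: hB_def)
      qed
    qed
    finally have 1: "ennreal v * P \<le> I hB x" .
    have "I hC x \<le> I (\<lambda>y. ennreal v * indicator (- B) y) x" unfolding I_def
    proof (intro nn_integral_mono)
      fix s :: real
      show "indicator {0<..} s * hC (s *\<^sub>R x) * ennreal (w (s * norm x) * (s * norm x)^?n / s)
          \<le> indicator {0<..} s * (ennreal v * indicator (- B) (s *\<^sub>R x)) * ennreal (w (s * norm x) * (s * norm x)^?n / s)"
      proof (cases "0 < s \<and> s *\<^sub>R x \<notin> B")
        case True
        then have "r / norm x \<le> s" using x by (auto simp: B_def field_simps)
        then have "f (s *\<^sub>R x) \<le> v" unfolding v_def using True r by (intro ray_mono[OF f]) auto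
        then show ?thesis using True unfolding hC_def
          by (auto intro!: mult_right_mono ennreal_leI)
      next
        case False
        then show ?thesis by (auto simp: hC_def)
      qed
    qed
    also have "\<dots> = ennreal v * Q" using IC[OF x] by (simp add: Icm)
    finally have 2: "I hC x \<le> ennreal v * Q" .
    have "I hC x * P \<le> ennreal v * Q * P" using 2 by (rule mult_right_mono) simp
    also have "\<dots> = (ennreal v * P) * Q" by (simp add: mult_ac)
    also have "\<dots> \<le> I hB x * Q" using 1 by (rule mult_right_mono) simp
    finally show ?thesis .
  qed
  define V where "V = (\<integral>\<^sup>+x. indicator (ball (0::'a) 1) x \<partial>lborel)"
  define A where "A = (\<integral>\<^sup>+y. hB y \<partial>?\<mu>)"
  define C where "C = (\<integral>\<^sup>+y. hC y \<partial>?\<mu>)"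
  define M where "M = emeasure ?\<mu> B"
  define N where "N = emeasure ?\<mu> (- B)"
  have ballm[measurable]: "ball (0::'a) 1 \<in> sets borel" by simp
  have AE0: "AE x in lborel. x \<noteq> (0::'a)" by (rule AE_lborel_singleton)
  have M_eq: "M = of_nat ?n * (V * P)"
  proof -
    have "M = (\<integral>\<^sup>+y. indicator B y \<partial>?\<mu>)" unfolding M_def by simp
    also have "\<dots> = of_nat ?n * (\<integral>\<^sup>+x. indicator (ball 0 1) x * I (indicator B) x \<partial>lborel)"
      by (rule repr) measurable
    also have "(\<integral>\<^sup>+x. indicator (ball 0 1) x * I (indicator B) x \<partial>lborel) = (\<integral>\<^sup>+x. indicator (ball (0::'a) 1) x * P \<partial>lborel)"
      by (rule nn_integral_cong_AE) (use AE0 in \<open>auto elim!: eventually_mono simp: IB\<close>)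
    also have "\<dots> = V * P" unfolding V_def by (rule nn_integral_multc) measurable
    finally show ?thesis .
  qed
  have N_eq: "N = of_nat ?n * (V * Q)"
  proof -
    have "N = (\<integral>\<^sup>+y. indicator (- B) y \<partial>?\<mu>)" unfolding N_def by simp
    also have "\<dots> = of_nat ?n * (\<integral>\<^sup>+x. indicator (ball 0 1) x * I (indicator (- B)) x \<partial>lborel)"
      by (rule repr) measurable
    also have "(\<integral>\<^sup>+x. indicator (ball 0 1) x * I (indicator (- B)) x \<partial>lborel) = (\<integral>\<^sup>+x. indicator (ball (0::'a) 1) x * Q \<partial>lborel)"
      by (rule nn_integral_cong_AE) (use AE0 in \<open>auto elim!: eventually_mono simp: IC\<close>)
    also have "\<dots> = V * Q" unfolding V_def by (rule nn_integral_multc) measurable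
    finally show ?thesis .
  qed
  have AN: "C * M \<le> A * N"
  proof -
    have "C * M = (of_nat ?n * of_nat ?n * V) * ((\<integral>\<^sup>+x. indicator (ball 0 1) x * I hC x \<partial>lborel) * P)"
      unfolding C_def M_eq repr[OF hCm] by (simp add: mult_ac)
    also have "(\<integral>\<^sup>+x. indicator (ball 0 1) x * I hC x \<partial>lborel) * P = (\<integral>\<^sup>+x. indicator (ball 0 1) x * I hC x * P \<partial>lborel)"
      by (rule nn_integral_multc[symmetric]) measurable
    also have "\<dots> \<le> (\<integral>\<^sup>+x. indicator (ball 0 1) x * I hB x * Q \<partial>lborel)"
      using AE0 by (intro nn_integral_mono_AE) (auto simp: mult.assoc intro!: mult_left_mono ptw)
    also have "\<dots> = (\<integral>\<^sup>+x. indicator (ball 0 1) x * I hB x \<partial>lborel) * Q"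
      by (rule nn_integral_multc) measurable
    also have "(of_nat ?n * of_nat ?n * V) * \<dots> = A * N"
      unfolding A_def N_eq repr[OF hBm] by (simp add: mult_ac)
    finally show ?thesis by (simp add: mult_left_mono)
  qed
  have ps: "emeasure ?\<mu> UNIV = 1" using prob_space.emeasure_space_1[OF prob] by simp
  have fB: "(\<integral>x. f x * indicator B x \<partial>?\<mu>) = enn2real A"
  proof -
    have "(\<integral>x. f x * indicator B x \<partial>?\<mu>) = enn2real (\<integral>\<^sup>+x. ennreal (f x * indicator B x) \<partial>?\<mu>)"
      by (rule integral_eq_nn_integral) (auto simp: fnn)
    also have "(\<integral>\<^sup>+x. ennreal (f x * indicator B x) \<partial>?\<mu>) = A"
      unfolding A_def hB_def by (intro nn_integral_cong) (auto split: split_indicator)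
    finally show ?thesis .
  qed
  have AC: "(\<integral>\<^sup>+x. ennreal (f x) \<partial>?\<mu>) = A + C"
  proof -
    have "(\<integral>\<^sup>+x. ennreal (f x) \<partial>?\<mu>) = (\<integral>\<^sup>+x. hB x + hC x \<partial>?\<mu>)"
      unfolding hB_def hC_def by (intro nn_integral_cong) (auto split: split_indicator)
    also have "\<dots> = A + C" unfolding A_def C_def by (rule nn_integral_add) auto
    finally show ?thesis .
  qed
  have fall: "(\<integral>x. f x \<partial>?\<mu>) = enn2real (A + C)"
    unfolding AC[symmetric] by (rule integral_eq_nn_integral) (auto simp: fnn)
  have "A + C \<le> (\<integral>\<^sup>+x. ennreal (f 0) \<partial>?\<mu>)"
    unfolding AC[symmetric] by (intro nn_integral_mono) (auto intro!: ennreal_leI fmax)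
  also have "\<dots> = ennreal (f 0)" using ps by simp
  finally have "A + C \<le> ennreal (f 0)" .
  then have ACfin: "A + C < \<top>" by (metis ennreal_less_top le_less_trans)
  then have Afin: "A < \<top>" and Cfin: "C < \<top>" by (simp_all add: less_top[symmetric])
  have MN: "M + N = 1" unfolding M_def N_def
    by (subst plus_emeasure) (auto simp: ps)
  then have Mfin: "M < \<top>" and Nfin: "N < \<top>" by (auto simp: less_top[symmetric])
  define a where "a = enn2real A"
  define c where "c = enn2real C"
  define m where "m = enn2real M"
  define k where "k = enn2real N"
  have Ae: "A = ennreal a" and Ce: "C = ennreal c" and Me: "M = ennreal m" and Ne: "N = ennreal k"
    using Afin Cfin Mfin Nfin by (auto simp: a_def c_def m_def k_def ennreal_enn2real_if)
  have nn: "0 \<le> a" "0 \<le> c" "0 \<le> m" "0 \<le> k" by (auto simp: a_def c_def m_def k_def)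
  have "ennreal (c * m) \<le> ennreal (a * k)"
    using AN unfolding Ae Ce Me Ne using nn by (simp add: ennreal_mult[symmetric])
  then have cm: "c * m \<le> a * k" using nn by (simp add: ennreal_le_iff)
  have "ennreal (m + k) = 1" using MN nn unfolding Me Ne by (subst ennreal_plus) auto
  then have mk: "m + k = 1" by (simp only: ennreal_eq_1)
  have gm: "measure ?\<mu> B = m" unfolding m_def M_def measure_def ..
  have "(a + c) * m \<le> a"
  proof -
    have "(a + c) * m = a * m + c * m" by (simp add: algebra_simps)
    also have "\<dots> \<le> a * m + a * k" using cm by simp
    also have "\<dots> = a" using mk by (metis distrib_left mult_1_right)
    finally show ?thesis .
  qed
  moreover have "enn2real (A + C) = a + c" unfolding Ae Ce using nn by (simp add: enn2real_plus)
  ultimately show ?thesis using fB fall gm unfolding B_def a_def by simp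
qed
end
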